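(* If $\mathscr{S}$ is a relaxed scenario, then $G_{=}(\mathscr{S})$ contains no induced cycle on $5$ vertices and no induced cycle on $\ell$ vertices for any $\ell\geq 7$. In particular, $G_{=}(\mathscr{S})$ is odd-hole free (contains no induced cycle of odd length greater than three).
   Context: All trees are planted phylogenetic trees: a tree $T$ has a distinguished vertex $0_T$ of degree $1$ whose unique neighbor $\rho_T$ is the root, and every vertex other than $0_T$ and the leaves $L(T)$ has at least two children. For $x,y\in V(T)$ write $y\preceq_T x$ if $x$ lies on the path from $0_T$ to $y$; edges are written $uv$ with $v\prec_T u$. $\mathrm{lca}_T$ denotes the last common ancestor. A time map for $T$ is $\tau_T\colon V(T)\to\mathbb{R}$ with $\tau_T(x)<\tau_T(y)$ whenever $x\prec_T y$. A relaxed scenario $\mathscr{S}=(T,S,\sigma,\mu,\tau_T,\tau_S)$ consists of a gene tree $T$ with time map $\tau_T$, a species tree $S$ with time map $\tau_S$, a map $\sigma\colon L(T)\to M$ with $M\subseteq L(S)$, and a map $\mu\colon V(T)\to V(S)\cup E(S)$ such that (S0) $\mu(x)=0_S$ iff $x=0_T$; (S1) $\mu(x)\in L(S)$ iff $x\in L(T)$, in which case $\mu(x)=\sigma(x)$; (S2) if $\mu(x)\in V(S)$ then $\tau_S(\mu(x))=\tau_T(x)$; (S3) if $\mu(x)=uv\in E(S)$ then $\tau_S(v)<\tau_T(x)<\tau_S(u)$. The EDT graph $G_{=}(\mathscr{S})$ has vertex set $L(T)$ and an edge $xy$ ($x\ne y$) iff $\tau_T(\mathrm{lca}_T(x,y))=\tau_S(\mathrm{lca}_S(\sigma(x),\sigma(y)))$.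 *)

theory Defs
  imports Complex_Main
begin

text \<open>A (planted, rooted) tree is given by a vertex set V, a set E of directed
  edges (u,v) with u the parent of v, and the planted vertex z (= 0_T).\<close>

definition children :: "('a \<times> 'a) set \<Rightarrow> 'a \<Rightarrow> 'a set" where
  "children E v = {w. (v, w) \<in> E}"

definition planted_phylo_tree :: "'a set \<Rightarrow> ('a \<times> 'a) set \<Rightarrow> 'a \<Rightarrow> bool" where
  "planted_phylo_tree V E z \<longleftrightarrow>
     finite V \<and> E \<subseteq> V \<times> V \<and> z \<in> V \<and>
     (\<forall>u. (u, z) \<notin> E) \<and>
     (\<forall>v\<in>V. v \<noteq> z \<longrightarrow> (\<exists>!u. (u, v) \<in> E)) \<and>
     (\<forall>v\<in>V. (z, v) \<in> E\<^sup>*) \<and>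
     card (children E z) = 1 \<and>
     (\<forall>v\<in>V. v \<noteq> z \<and> children E v \<noteq> {} \<longrightarrow> card (children E v) \<ge> 2)"

definition leaves :: "'a set \<Rightarrow> ('a \<times> 'a) set \<Rightarrow> 'a \<Rightarrow> 'a set" where
  "leaves V E z = {v \<in> V. v \<noteq> z \<and> children E v = {}}"

text \<open>y \<preceq>_T x iff x lies on the path from 0_T to y, i.e. (x,y) \<in> E^*.\<close>
definition lca :: "'a set \<Rightarrow> ('a \<times> 'a) set \<Rightarrow> 'a \<Rightarrow> 'a \<Rightarrow> 'a" where
  "lca V E x y = (THE w. w \<in> V \<and> (w, x) \<in> E\<^sup>* \<and> (w, y) \<in> E\<^sup>* \<and>
      (\<forall>w'\<in>V. (w', x) \<in> E\<^sup>* \<and> (w', y) \<in> E\<^sup>* \<longrightarrow> (w', w) \<in> E\<^sup>*))"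

definition time_map :: "'a set \<Rightarrow> ('a \<times> 'a) set \<Rightarrow> ('a \<Rightarrow> real) \<Rightarrow> bool" where
  "time_map V E \<tau> \<longleftrightarrow> (\<forall>x\<in>V. \<forall>y\<in>V. (y, x) \<in> E\<^sup>+ \<longrightarrow> \<tau> x < \<tau> y)"

datatype 'b vert_or_edge = SVtx 'b | SEdge 'b 'b

definition relaxed_scenario ::
  "'a set \<Rightarrow> ('a \<times> 'a) set \<Rightarrow> 'a \<Rightarrow> 'b set \<Rightarrow> ('b \<times> 'b) set \<Rightarrow> 'b \<Rightarrow>
   ('a \<Rightarrow> 'b) \<Rightarrow> ('a \<Rightarrow> 'b vert_or_edge) \<Rightarrow> ('a \<Rightarrow> real) \<Rightarrow> ('b \<Rightarrow> real) \<Rightarrow> bool" where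
  "relaxed_scenario VT ET zT VS ES zS \<sigma> \<mu> \<tau>T \<tau>S \<longleftrightarrow>
     planted_phylo_tree VT ET zT \<and> planted_phylo_tree VS ES zS \<and>
     time_map VT ET \<tau>T \<and> time_map VS ES \<tau>S \<and>
     (\<forall>x\<in>leaves VT ET zT. \<sigma> x \<in> leaves VS ES zS) \<and>
     (\<forall>x\<in>VT. case \<mu> x of SVtx v \<Rightarrow> v \<in> VS | SEdge u v \<Rightarrow> (u, v) \<in> ES) \<and>
     (\<forall>x\<in>VT. \<mu> x = SVtx zS \<longleftrightarrow> x = zT) \<and>
     (\<forall>x\<in>VT. (\<exists>v\<in>leaves VS ES zS. \<mu> x = SVtx v) \<longleftrightarrow> x \<in> leaves VT ET zT) \<and>
     (\<forall>x\<in>leaves VT ET zT. \<mu> x = SVtx (\<sigma> x)) \<and>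
     (\<forall>x\<in>VT. \<forall>v. \<mu> x = SVtx v \<longrightarrow> \<tau>S v = \<tau>T x) \<and>
     (\<forall>x\<in>VT. \<forall>u v. \<mu> x = SEdge u v \<longrightarrow> \<tau>S v < \<tau>T x \<and> \<tau>T x < \<tau>S u)"

definition edt_edge ::
  "'a set \<Rightarrow> ('a \<times> 'a) set \<Rightarrow> 'a \<Rightarrow> 'b set \<Rightarrow> ('b \<times> 'b) set \<Rightarrow>
   ('a \<Rightarrow> 'b) \<Rightarrow> ('a \<Rightarrow> real) \<Rightarrow> ('b \<Rightarrow> real) \<Rightarrow> 'a \<Rightarrow> 'a \<Rightarrow> bool" where
  "edt_edge VT ET zT VS ES \<sigma> \<tau>T \<tau>S x y \<longleftrightarrow>
     x \<in> leaves VT ET zT \<and> y \<in> leaves VT ET zT \<and> x \<noteq> y \<and>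
     \<tau>T (lca VT ET x y) = \<tau>S (lca VS ES (\<sigma> x) (\<sigma> y))"

definition induced_cycle :: "('a \<Rightarrow> 'a \<Rightarrow> bool) \<Rightarrow> 'a set \<Rightarrow> 'a list \<Rightarrow> bool" where
  "induced_cycle adj V vs \<longleftrightarrow>
     length vs \<ge> 3 \<and> distinct vs \<and> set vs \<subseteq> V \<and>
     (\<forall>i<length vs. \<forall>j<length vs. i \<noteq> j \<longrightarrow>
        (adj (vs ! i) (vs ! j) \<longleftrightarrow>
           j = Suc i mod length vs \<or> i = Suc j mod length vs))"

end

theory Submission
  imports Defs
begin

lemma ppt_facts:
  assumes "planted_phylo_tree V E z"
  shows "E \<subseteq> V \<times> V" "finite V" "z \<in> V" "\<And>u. (u, z) \<notin> E"
    "\<And>v u u'. v \<in> V \<Longrightarrow> v \<noteq> z \<Longrightarrow> (u, v) \<in> E \<Longrightarrow> (u', v) \<in> E \<Longrightarrow> u = u'"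
    "\<And>v. v \<in> V \<Longrightarrow> (z, v) \<in> E\<^sup>*"
  using assms unfolding planted_phylo_tree_def by blast+

lemma anc_chain:
  assumes T: "planted_phylo_tree V E z" and "(u, b) \<in> E\<^sup>*" "(w, b) \<in> E\<^sup>*"
  shows "(u, w) \<in> E\<^sup>* \<or> (w, u) \<in> E\<^sup>*"
  using assms(2,3)
proof (induction arbitrary: w rule: rtrancl_induct)
  case base
  then show ?case by blast
next
  case (step y b')
  show ?case
  proof (cases "w = b'")
    case True
    then show ?thesis using step by auto
  next
    case False
    then have "(w, b') \<in> E\<^sup>+" using step(4) by (simp add: rtrancl_eq_or_trancl)
    then obtain y' where y': "(w, y') \<in> E\<^sup>*" "(y', b') \<in> E" by (meson tranclD2)
    have "b' \<in> V" using step(2) ppt_facts(1)[OF T] by auto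
    moreover have "b' \<noteq> z" using step(2) ppt_facts(4)[OF T] by auto
    ultimately have "y' = y" using ppt_facts(5)[OF T] y'(2) step(2) by blast
    then show ?thesis using step(3) y'(1) by blast
  qed
qed

lemma anc_le:
  assumes T: "planted_phylo_tree V E z" and tm: "time_map V E \<tau>"
    and "(u, v) \<in> E\<^sup>*" "v \<in> V"
  shows "\<tau> v \<le> \<tau> u"
proof (cases "u = v")
  case True then show ?thesis by simp
next
  case False
  then have "(u, v) \<in> E\<^sup>+" using assms(3) by (simp add: rtrancl_eq_or_trancl)
  moreover have "E\<^sup>+ \<subseteq> V \<times> V" using trancl_subset_Sigma[OF ppt_facts(1)[OF T]] .
  ultimately show ?thesis using tm unfolding time_map_def by fastforce
qed

lemma anc_lt:
  assumes T: "planted_phylo_tree V E z" and tm: "time_map V E \<tau>"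
    and "(u, v) \<in> E\<^sup>*" "u \<noteq> v"
  shows "\<tau> v < \<tau> u"
proof -
  have "(u, v) \<in> E\<^sup>+" using assms(3,4) by (simp add: rtrancl_eq_or_trancl)
  moreover have "E\<^sup>+ \<subseteq> V \<times> V" using trancl_subset_Sigma[OF ppt_facts(1)[OF T]] .
  ultimately show ?thesis using tm unfolding time_map_def by fastforce
qed

lemma lca_props:
  assumes T: "planted_phylo_tree V E z" and tm: "time_map V E \<tau>"
    and x: "x \<in> V" and y: "y \<in> V"
  shows "lca V E x y \<in> V \<and> (lca V E x y, x) \<in> E\<^sup>* \<and> (lca V E x y, y) \<in> E\<^sup>* \<and>
     (\<forall>w'\<in>V. (w', x) \<in> E\<^sup>* \<and> (w', y) \<in> E\<^sup>* \<longrightarrow> (w', lca V E x y) \<in> E\<^sup>*)"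
proof -
  define P where "P = (\<lambda>w. w \<in> V \<and> (w, x) \<in> E\<^sup>* \<and> (w, y) \<in> E\<^sup>* \<and>
      (\<forall>w'\<in>V. (w', x) \<in> E\<^sup>* \<and> (w', y) \<in> E\<^sup>* \<longrightarrow> (w', w) \<in> E\<^sup>*))"
  define C where "C = {w\<in>V. (w, x) \<in> E\<^sup>* \<and> (w, y) \<in> E\<^sup>*}"
  have fin: "finite C" using ppt_facts(2)[OF T] unfolding C_def by auto
  have ne: "z \<in> C" using ppt_facts(3,6)[OF T] x y unfolding C_def by auto
  have "Min (\<tau> ` C) \<in> \<tau> ` C" using fin ne by (intro Min_in) auto
  then obtain w where w: "w \<in> C" "\<tau> w = Min (\<tau> ` C)" by auto
  have wmin: "\<tau> w \<le> \<tau> w'" if "w' \<in> C" for w' using w fin that by auto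
  have Pw: "P w"
    unfolding P_def
  proof (intro conjI ballI impI)
    show "w \<in> V" "(w, x) \<in> E\<^sup>*" "(w, y) \<in> E\<^sup>*" using w(1) unfolding C_def by auto
  next
    fix w' assume "w' \<in> V" "(w', x) \<in> E\<^sup>* \<and> (w', y) \<in> E\<^sup>*"
    then have c: "w' \<in> C" unfolding C_def by auto
    have "(w, w') \<in> E\<^sup>* \<or> (w', w) \<in> E\<^sup>*"
      using anc_chain[OF T] w(1) c unfolding C_def by blast
    moreover have "\<not> ((w, w') \<in> E\<^sup>* \<and> w \<noteq> w')"
      using anc_lt[OF T tm] wmin[OF c] by fastforce
    ultimately show "(w', w) \<in> E\<^sup>*" by auto
  qed
  have uniq: "w2 = w" if "P w2" for w2
  proof (rule ccontr)
    assume ne: "w2 \<noteq> w"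
    have "(w2, w) \<in> E\<^sup>*" "(w, w2) \<in> E\<^sup>*" using that Pw unfolding P_def by auto
    then have "\<tau> w < \<tau> w2" "\<tau> w2 < \<tau> w" using anc_lt[OF T tm] ne by auto
    then show False by simp
  qed
  have "lca V E x y = w" unfolding lca_def
    using the_equality[of P w] Pw uniq unfolding P_def by blast
  then show ?thesis using Pw unfolding P_def by simp
qed

lemma lca_sym: "lca V E x y = lca V E y x"
  unfolding lca_def by (rule arg_cong[where f=The]) auto

lemma ultra:
  assumes T: "planted_phylo_tree V E z" and tm: "time_map V E \<tau>"
    and V: "a \<in> V" "b \<in> V" "c \<in> V"
  shows "\<tau> (lca V E a c) \<le> max (\<tau> (lca V E a b)) (\<tau> (lca V E b c))"
proof -
  note ab = lca_props[OF T tm V(1,2)]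
  note bc = lca_props[OF T tm V(2,3)]
  note ac = lca_props[OF T tm V(1,3)]
  have "(lca V E a b, lca V E b c) \<in> E\<^sup>* \<or> (lca V E b c, lca V E a b) \<in> E\<^sup>*"
    using anc_chain[OF T] ab bc by blast
  then show ?thesis
  proof
    assume h: "(lca V E a b, lca V E b c) \<in> E\<^sup>*"
    then have "(lca V E a b, c) \<in> E\<^sup>*" using bc by (meson rtrancl_trans)
    then have "(lca V E a b, lca V E a c) \<in> E\<^sup>*" using ab ac by blast
    then have "\<tau> (lca V E a c) \<le> \<tau> (lca V E a b)" using anc_le[OF T tm] ac by blast
    then show ?thesis by simp
  next
    assume h: "(lca V E b c, lca V E a b) \<in> E\<^sup>*"
    then have "(lca V E b c, a) \<in> E\<^sup>*" using ab by (meson rtrancl_trans)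
    then have "(lca V E b c, lca V E a c) \<in> E\<^sup>*" using bc ac by blast
    then have "\<tau> (lca V E a c) \<le> \<tau> (lca V E b c)" using anc_le[OF T tm] ac by blast
    then show ?thesis by simp
  qed
qed

lemma step_eq:
  fixes a b c a' b' c' :: real
  assumes "a \<le> max b c" "b \<le> max a c" "c \<le> max a b"
    "a' \<le> max b' c'" "b' \<le> max a' c'" "c' \<le> max a' b'"
    "b = b'" "c = c'" "a \<noteq> a'"
  shows "b = c"
  using assms by (auto simp: max_def split: if_splits)

lemma path6:
  fixes t s :: "nat \<Rightarrow> nat \<Rightarrow> real"
  assumes symt: "\<And>i j. t i j = t j i" and syms: "\<And>i j. s i j = s j i"
    and ut: "\<And>i j k. i \<le> 5 \<Longrightarrow> j \<le> 5 \<Longrightarrow> k \<le> 5 \<Longrightarrow> t i k \<le> max (t i j) (t j k)"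
    and us: "\<And>i j k. i \<le> 5 \<Longrightarrow> j \<le> 5 \<Longrightarrow> k \<le> 5 \<Longrightarrow> s i k \<le> max (s i j) (s j k)"
    and adj: "\<And>i. i < 5 \<Longrightarrow> t i (Suc i) = s i (Suc i)"
    and nadj: "\<And>i j. j \<le> 5 \<Longrightarrow> Suc i < j \<Longrightarrow> t i j \<noteq> s i j"
  shows False
proof -
  have e: "t i (Suc i) = t (Suc i) (Suc (Suc i))" if "i < 4" for i
  proof (rule step_eq)
    show "t i (Suc (Suc i)) \<le> max (t i (Suc i)) (t (Suc i) (Suc (Suc i)))" using ut that by simp
    show "t i (Suc i) \<le> max (t i (Suc (Suc i))) (t (Suc i) (Suc (Suc i)))"
      using ut[of i "Suc (Suc i)" "Suc i"] that symt by (simp add: max.commute)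
    show "t (Suc i) (Suc (Suc i)) \<le> max (t i (Suc (Suc i))) (t i (Suc i))"
      using ut[of "Suc i" i "Suc (Suc i)"] that symt by (simp add: max.commute)
    show "s i (Suc (Suc i)) \<le> max (s i (Suc i)) (s (Suc i) (Suc (Suc i)))" using us that by simp
    show "s i (Suc i) \<le> max (s i (Suc (Suc i))) (s (Suc i) (Suc (Suc i)))"
      using us[of i "Suc (Suc i)" "Suc i"] that syms by (simp add: max.commute)
    show "s (Suc i) (Suc (Suc i)) \<le> max (s i (Suc (Suc i))) (s i (Suc i))"
      using us[of "Suc i" i "Suc (Suc i)"] that syms by (simp add: max.commute)
    show "t i (Suc i) = s i (Suc i)" using adj that by simp
    show "t (Suc i) (Suc (Suc i)) = s (Suc i) (Suc (Suc i))" using adj that by simp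
    show "t i (Suc (Suc i)) \<noteq> s i (Suc (Suc i))" using nadj that by simp
  qed
  define c where "c = t 0 1"
  have tc: "t 0 1 = c" "t 1 2 = c" "t 2 3 = c" "t 3 4 = c" "t 4 5 = c"
    using e[of 0] e[of 1] e[of 2] e[of 3] unfolding c_def by (simp_all add: numeral_eq_Suc)
  have sc: "s 0 1 = c" "s 1 2 = c" "s 2 3 = c" "s 3 4 = c" "s 4 5 = c"
    using tc adj[of 0] adj[of 1] adj[of 2] adj[of 3] adj[of 4] by (simp_all add: numeral_eq_Suc)
  have tle: "t 0 2 \<le> c" "t 1 3 \<le> c" "t 2 4 \<le> c" "t 3 5 \<le> c"
    using ut[of 0 1 2] ut[of 1 2 3] ut[of 2 3 4] ut[of 3 4 5] tc by auto
  have tle2: "t 0 3 \<le> c" "t 1 4 \<le> c" "t 2 5 \<le> c"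
    using ut[of 0 2 3] ut[of 1 3 4] ut[of 2 4 5] tc tle by auto
  have tle3: "t 0 4 \<le> c" "t 1 5 \<le> c"
    using ut[of 0 3 4] ut[of 1 4 5] tc tle2 by auto
  have tle4: "t 0 5 \<le> c"
    using ut[of 0 4 5] tc tle3 by auto
  have sle: "s 0 2 \<le> c" "s 1 3 \<le> c" "s 2 4 \<le> c" "s 3 5 \<le> c"
    using us[of 0 1 2] us[of 1 2 3] us[of 2 3 4] us[of 3 4 5] sc by auto
  have sle2: "s 0 3 \<le> c" "s 1 4 \<le> c" "s 2 5 \<le> c"
    using us[of 0 2 3] us[of 1 3 4] us[of 2 4 5] sc sle by auto
  have sle3: "s 0 4 \<le> c" "s 1 5 \<le> c"
    using us[of 0 3 4] us[of 1 4 5] sc sle2 by auto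
  have sle4: "s 0 5 \<le> c"
    using us[of 0 4 5] sc sle3 by auto
  define P where "P i j = (t i j < c)" for i j
  define Q where "Q i j = (s i j < c)" for i j
  have Ptr: "P i k" if "P i j" "P j k" "i \<le> 5" "j \<le> 5" "k \<le> 5" for i j k
    using ut[of i j k] that unfolding P_def by auto
  have Qtr: "Q i k" if "Q i j" "Q j k" "i \<le> 5" "j \<le> 5" "k \<le> 5" for i j k
    using us[of i j k] that unfolding Q_def by auto
  have Ps: "P i j = P j i" for i j using symt unfolding P_def by auto
  have Qs: "Q i j = Q j i" for i j using syms unfolding Q_def by auto
  have nP: "\<not> P 0 1" "\<not> P 1 2" "\<not> P 2 3" "\<not> P 3 4" "\<not> P 4 5" using tc unfolding P_def by auto
  have nQ: "\<not> Q 0 1" "\<not> Q 1 2" "\<not> Q 2 3" "\<not> Q 3 4" "\<not> Q 4 5" using sc unfolding Q_def by auto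
  have cov: "P i j \<or> Q i j" if "t i j \<le> c" "s i j \<le> c" "t i j \<noteq> s i j" for i j
    using that unfolding P_def Q_def by auto
  have c02: "P 0 2 \<or> Q 0 2" using cov tle sle nadj[of 2 0] by simp
  have c03: "P 0 3 \<or> Q 0 3" using cov tle2 sle2 nadj[of 3 0] by simp
  have c04: "P 0 4 \<or> Q 0 4" using cov tle3 sle3 nadj[of 4 0] by simp
  have c05: "P 0 5 \<or> Q 0 5" using cov tle4 sle4 nadj[of 5 0] by simp
  have c25: "P 2 5 \<or> Q 2 5" using cov tle2 sle2 nadj[of 5 2] by simp
  have c35: "P 3 5 \<or> Q 3 5" using cov tle sle nadj[of 5 3] by simp
  have c24: "P 2 4 \<or> Q 2 4" using cov tle sle nadj[of 4 2] by simp
  show False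
  proof (cases "P 0 2")
    case True
    have "\<not> P 0 3" using Ptr[of 2 0 3] True Ps nP by auto
    then have "Q 0 3" using c03 by auto
    then have "\<not> Q 0 4" using Qtr[of 3 0 4] Qs nQ by auto
    then have "P 0 4" using c04 by auto
    then have "\<not> P 0 5" using Ptr[of 4 0 5] Ps nP by auto
    then have "Q 0 5" using c05 by auto
    then have "Q 3 5" using Qtr[of 3 0 5] \<open>Q 0 3\<close> Qs by auto
    have "P 2 4" using Ptr[of 2 0 4] \<open>P 0 4\<close> True Ps by auto
    have "\<not> P 2 5" using Ptr[of 4 2 5] \<open>P 2 4\<close> Ps nP by auto
    moreover have "\<not> Q 2 5" using Qtr[of 2 5 3] \<open>Q 3 5\<close> Qs nQ by auto
    ultimately show False using c25 by auto
  next
    case False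
    then have T: "Q 0 2" using c02 by auto
    have "\<not> Q 0 3" using Qtr[of 2 0 3] T Qs nQ by auto
    then have "P 0 3" using c03 by auto
    then have "\<not> P 0 4" using Ptr[of 3 0 4] Ps nP by auto
    then have "Q 0 4" using c04 by auto
    then have "\<not> Q 0 5" using Qtr[of 4 0 5] Qs nQ by auto
    then have "P 0 5" using c05 by auto
    then have "P 3 5" using Ptr[of 3 0 5] \<open>P 0 3\<close> Ps by auto
    have "Q 2 4" using Qtr[of 2 0 4] \<open>Q 0 4\<close> T Qs by auto
    have "\<not> Q 2 5" using Qtr[of 4 2 5] \<open>Q 2 4\<close> Qs nQ by auto
    moreover have "\<not> P 2 5" using Ptr[of 2 5 3] \<open>P 3 5\<close> Ps nP by auto
    ultimately show False using c25 by auto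
  qed
qed

lemma tri:
  fixes t s :: "nat \<Rightarrow> nat \<Rightarrow> real"
  assumes symt: "\<And>i j. t i j = t j i" and syms: "\<And>i j. s i j = s j i"
    and ut: "\<And>i j k. i \<in> A \<Longrightarrow> j \<in> A \<Longrightarrow> k \<in> A \<Longrightarrow> t i k \<le> max (t i j) (t j k)"
    and us: "\<And>i j k. i \<in> A \<Longrightarrow> j \<in> A \<Longrightarrow> k \<in> A \<Longrightarrow> s i k \<le> max (s i j) (s j k)"
    and abc: "a \<in> A" "b \<in> A" "c \<in> A"
    and "t a b = s a b" "t b c = s b c" "t a c \<noteq> s a c"
  shows "t a b = t b c"
proof (rule step_eq)
    show "t a c \<le> max (t a b) (t b c)" using ut abc by simp
    show "t a b \<le> max (t a c) (t b c)"
      using ut[of a c b] abc symt by (simp add: max.commute)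
    show "t b c \<le> max (t a c) (t a b)"
      using ut[of b a c] abc symt by (simp add: max.commute)
    show "s a c \<le> max (s a b) (s b c)" using us abc by simp
    show "s a b \<le> max (s a c) (s b c)"
      using us[of a c b] abc syms by (simp add: max.commute)
    show "s b c \<le> max (s a c) (s a b)"
      using us[of b a c] abc syms by (simp add: max.commute)
qed (use assms in auto)

lemma cyc5:
  fixes t s :: "nat \<Rightarrow> nat \<Rightarrow> real"
  assumes symt: "\<And>i j. t i j = t j i" and syms: "\<And>i j. s i j = s j i"
    and ut: "\<And>i j k. i \<le> 4 \<Longrightarrow> j \<le> 4 \<Longrightarrow> k \<le> 4 \<Longrightarrow> t i k \<le> max (t i j) (t j k)"
    and us: "\<And>i j k. i \<le> 4 \<Longrightarrow> j \<le> 4 \<Longrightarrow> k \<le> 4 \<Longrightarrow> s i k \<le> max (s i j) (s j k)"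
    and adj: "t 0 1 = s 0 1" "t 1 2 = s 1 2" "t 2 3 = s 2 3" "t 3 4 = s 3 4" "t 4 0 = s 4 0"
    and nadj: "t 0 2 \<noteq> s 0 2" "t 0 3 \<noteq> s 0 3" "t 1 3 \<noteq> s 1 3" "t 1 4 \<noteq> s 1 4" "t 2 4 \<noteq> s 2 4"
  shows False
proof -
  have ut': "t i k \<le> max (t i j) (t j k)" if "i \<in> {..4}" "j \<in> {..4}" "k \<in> {..4}" for i j k
    using ut that by auto
  have us': "s i k \<le> max (s i j) (s j k)" if "i \<in> {..4}" "j \<in> {..4}" "k \<in> {..4}" for i j k
    using us that by auto
  note tr = tri[of t s "{..4::nat}", OF symt syms ut' us']
  have e1: "t 0 1 = t 1 2" using tr[of 0 1 2] adj nadj by simp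
  have e2: "t 1 2 = t 2 3" using tr[of 1 2 3] adj nadj by simp
  have e3: "t 2 3 = t 3 4" using tr[of 2 3 4] adj nadj by simp
  have e4: "t 3 4 = t 4 0" using tr[of 3 4 0] adj nadj symt syms by simp
  define c where "c = t 0 1"
  have tc: "t 0 1 = c" "t 1 2 = c" "t 2 3 = c" "t 3 4 = c" "t 4 0 = c"
    using e1 e2 e3 e4 unfolding c_def by simp_all
  have sc: "s 0 1 = c" "s 1 2 = c" "s 2 3 = c" "s 3 4 = c" "s 4 0 = c"
    using tc adj by simp_all
  have tle: "t 0 2 \<le> c" "t 1 3 \<le> c" "t 2 4 \<le> c" "t 0 3 \<le> c" "t 1 4 \<le> c"
    using ut[of 0 1 2] ut[of 1 2 3] ut[of 2 3 4] ut[of 0 4 3] ut[of 1 0 4] tc symt by auto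
  have sle: "s 0 2 \<le> c" "s 1 3 \<le> c" "s 2 4 \<le> c" "s 0 3 \<le> c" "s 1 4 \<le> c"
    using us[of 0 1 2] us[of 1 2 3] us[of 2 3 4] us[of 0 4 3] us[of 1 0 4] sc syms by auto
  define P where "P i j = (t i j < c)" for i j
  define Q where "Q i j = (s i j < c)" for i j
  have Ptr: "P i k" if "P i j" "P j k" "i \<le> 4" "j \<le> 4" "k \<le> 4" for i j k
    using ut[of i j k] that unfolding P_def by auto
  have Qtr: "Q i k" if "Q i j" "Q j k" "i \<le> 4" "j \<le> 4" "k \<le> 4" for i j k
    using us[of i j k] that unfolding Q_def by auto
  have Ps: "P i j = P j i" for i j using symt unfolding P_def by auto
  have Qs: "Q i j = Q j i" for i j using syms unfolding Q_def by auto
  have nP: "\<not> P 0 1" "\<not> P 1 2" "\<not> P 2 3" "\<not> P 3 4" "\<not> P 4 0" using tc unfolding P_def by auto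
  have nQ: "\<not> Q 0 1" "\<not> Q 1 2" "\<not> Q 2 3" "\<not> Q 3 4" "\<not> Q 4 0" using sc unfolding Q_def by auto
  have cov: "P i j \<or> Q i j" if "t i j \<le> c" "s i j \<le> c" "t i j \<noteq> s i j" for i j
    using that unfolding P_def Q_def by auto
  have c: "P 0 2 \<or> Q 0 2" "P 0 3 \<or> Q 0 3" "P 1 3 \<or> Q 1 3" "P 1 4 \<or> Q 1 4" "P 2 4 \<or> Q 2 4"
    using cov tle sle nadj by auto
  show False
  proof (cases "P 0 2")
    case True
    have "\<not> P 0 3" using Ptr[of 2 0 3] True Ps nP by auto
    then have "Q 0 3" using c by auto
    then have "\<not> Q 1 3" using Qtr[of 0 3 1] Qs nQ by auto
    then have "P 1 3" using c by auto
    then have "\<not> P 1 4" using Ptr[of 3 1 4] Ps nP by auto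
    then have "Q 1 4" using c by auto
    then have "\<not> Q 2 4" using Qtr[of 1 4 2] Qs nQ by auto
    then have "P 2 4" using c by auto
    then show False using Ptr[of 0 2 4] True Ps nP by auto
  next
    case False
    then have T: "Q 0 2" using c by auto
    have "\<not> Q 0 3" using Qtr[of 2 0 3] T Qs nQ by auto
    then have "P 0 3" using c by auto
    then have "\<not> P 1 3" using Ptr[of 0 3 1] Ps nP by auto
    then have "Q 1 3" using c by auto
    then have "\<not> Q 1 4" using Qtr[of 3 1 4] Qs nQ by auto
    then have "P 1 4" using c by auto
    then have "\<not> P 2 4" using Ptr[of 1 4 2] Ps nP by auto
    then have "Q 2 4" using c by auto
    then show False using Qtr[of 0 2 4] T Qs nQ by auto
  qed
qed

theorem proposition3:
  fixes VT :: "'a set" and ET :: "('a \<times> 'a) set" and zT :: 'a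
    and VS :: "'b set" and ES :: "('b \<times> 'b) set" and zS :: 'b
    and \<sigma> :: "'a \<Rightarrow> 'b" and \<mu> :: "'a \<Rightarrow> 'b vert_or_edge"
    and \<tau>T :: "'a \<Rightarrow> real" and \<tau>S :: "'b \<Rightarrow> real"
  assumes "relaxed_scenario VT ET zT VS ES zS \<sigma> \<mu> \<tau>T \<tau>S"
  shows "(\<forall>vs. induced_cycle (edt_edge VT ET zT VS ES \<sigma> \<tau>T \<tau>S) (leaves VT ET zT) vs
              \<longrightarrow> length vs \<noteq> 5 \<and> \<not> length vs \<ge> 7)
       \<and> (\<forall>vs. induced_cycle (edt_edge VT ET zT VS ES \<sigma> \<tau>T \<tau>S) (leaves VT ET zT) vs
              \<longrightarrow> \<not> (odd (length vs) \<and> length vs > 3))"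
proof -
  have TT: "planted_phylo_tree VT ET zT" and TS: "planted_phylo_tree VS ES zS"
    and tmT: "time_map VT ET \<tau>T" and tmS: "time_map VS ES \<tau>S"
    and sig: "\<And>x. x \<in> leaves VT ET zT \<Longrightarrow> \<sigma> x \<in> leaves VS ES zS"
    using assms unfolding relaxed_scenario_def by auto
  have A: "length vs \<noteq> 5 \<and> \<not> length vs \<ge> 7"
    if ic: "induced_cycle (edt_edge VT ET zT VS ES \<sigma> \<tau>T \<tau>S) (leaves VT ET zT) vs" for vs
  proof -
    define n where "n = length vs"
    define t where "t i j = \<tau>T (lca VT ET (vs ! i) (vs ! j))" for i j
    define s where "s i j = \<tau>S (lca VS ES (\<sigma> (vs ! i)) (\<sigma> (vs ! j)))" for i j
    have dist: "distinct vs" and sub: "set vs \<subseteq> leaves VT ET zT"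
      and ind: "\<And>i j. i < n \<Longrightarrow> j < n \<Longrightarrow> i \<noteq> j \<Longrightarrow>
        (edt_edge VT ET zT VS ES \<sigma> \<tau>T \<tau>S (vs ! i) (vs ! j) \<longleftrightarrow>
           j = Suc i mod n \<or> i = Suc j mod n)"
      using ic unfolding induced_cycle_def n_def by auto
    have leaf: "vs ! i \<in> leaves VT ET zT" if "i < n" for i
      using sub that unfolding n_def by auto
    have inT: "vs ! i \<in> VT" if "i < n" for i using leaf[OF that] unfolding leaves_def by auto
    have inS: "\<sigma> (vs ! i) \<in> VS" if "i < n" for i
      using sig[OF leaf[OF that]] unfolding leaves_def by auto
    have symt: "\<And>i j. t i j = t j i" unfolding t_def using lca_sym by metis
    have syms: "\<And>i j. s i j = s j i" unfolding s_def using lca_sym by metis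
    have ut: "t i k \<le> max (t i j) (t j k)" if "i < n" "j < n" "k < n" for i j k
      unfolding t_def using ultra[OF TT tmT inT inT inT] that by blast
    have us: "s i k \<le> max (s i j) (s j k)" if "i < n" "j < n" "k < n" for i j k
      unfolding s_def using ultra[OF TS tmS inS inS inS] that by blast
    have key: "(t i j = s i j) \<longleftrightarrow> (j = Suc i mod n \<or> i = Suc j mod n)"
      if "i < n" "j < n" "i \<noteq> j" for i j
    proof -
      have "vs ! i \<noteq> vs ! j" using dist that unfolding n_def by (simp add: nth_eq_iff_index_eq)
      then have "edt_edge VT ET zT VS ES \<sigma> \<tau>T \<tau>S (vs ! i) (vs ! j) \<longleftrightarrow> t i j = s i j"
        using leaf that unfolding edt_edge_def t_def s_def by auto
      then show ?thesis using ind[OF that] by simp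
    qed
    show ?thesis
    proof
      show "length vs \<noteq> 5"
      proof
        assume "length vs = 5"
        then have n5: "n = 5" unfolding n_def .
        show False
        proof (rule cyc5[of t s])
          show "t i k \<le> max (t i j) (t j k)" if "i \<le> 4" "j \<le> 4" "k \<le> 4" for i j k
            using ut that n5 by simp
          show "s i k \<le> max (s i j) (s j k)" if "i \<le> 4" "j \<le> 4" "k \<le> 4" for i j k
            using us that n5 by simp
          show "t 0 1 = s 0 1" "t 1 2 = s 1 2" "t 2 3 = s 2 3" "t 3 4 = s 3 4" "t 4 0 = s 4 0"
            using key[of 0 1] key[of 1 2] key[of 2 3] key[of 3 4] key[of 4 0] n5 by simp_all
          show "t 0 2 \<noteq> s 0 2" "t 0 3 \<noteq> s 0 3" "t 1 3 \<noteq> s 1 3" "t 1 4 \<noteq> s 1 4" "t 2 4 \<noteq> s 2 4"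
            using key[of 0 2] key[of 0 3] key[of 1 3] key[of 1 4] key[of 2 4] n5 by simp_all
        qed (use symt syms in auto)
      qed
      show "\<not> length vs \<ge> 7"
      proof
        assume "length vs \<ge> 7"
        then have n7: "n \<ge> 7" unfolding n_def .
        show False
        proof (rule path6[of t s])
          show "t i k \<le> max (t i j) (t j k)" if "i \<le> 5" "j \<le> 5" "k \<le> 5" for i j k
            using ut that n7 by simp
          show "s i k \<le> max (s i j) (s j k)" if "i \<le> 5" "j \<le> 5" "k \<le> 5" for i j k
            using us that n7 by simp
          show "t i (Suc i) = s i (Suc i)" if "i < 5" for i
            using key[of i "Suc i"] that n7 by simp
          show "t i j \<noteq> s i j" if "j \<le> 5" "Suc i < j" for i j
          proof -
            have "Suc i mod n = Suc i" "Suc j mod n = Suc j" using that n7 by simp_all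
            then show ?thesis using key[of i j] that n7 by simp
          qed
        qed (use symt syms in auto)
      qed
    qed
  qed
  show ?thesis
  proof (rule conjI; intro allI impI)
    fix vs assume "induced_cycle (edt_edge VT ET zT VS ES \<sigma> \<tau>T \<tau>S) (leaves VT ET zT) vs"
    then show "length vs \<noteq> 5 \<and> \<not> length vs \<ge> 7" using A by blast
  next
    fix vs assume h: "induced_cycle (edt_edge VT ET zT VS ES \<sigma> \<tau>T \<tau>S) (leaves VT ET zT) vs"
    show "\<not> (odd (length vs) \<and> length vs > 3)"
    proof
      assume o: "odd (length vs) \<and> length vs > 3"
      have "length vs \<noteq> 4" "length vs \<noteq> 6" using o by auto
      then show False using A[OF h] o by linarith
    qed
  qed
qed

end
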